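(* Let $(a_1,\rho_1)\in(0,\infty)\times(0,\infty)$ satisfy $h(a_1,\rho_1)\ge0$. Then for every $a_2\in(0,a_1]$ one has $h(a_2,\rho_2)\ge0$ for all $\rho_2\in\big[\frac{a_2}{a_1}\rho_1,\rho_1\big]$.
   Context: Fix $2<q<\frac{10}{3}<p<6$ and $\mu>0$. For $h:\mathbb{R}^2\to\mathbb{R}$ let $D_x^{-1}h(x,y)=\int_{-\infty}^x h(s,y)\,ds$; let $X$ be the Hilbert space obtained as the completion (in the a.e.-limit sense) of $\{g_x:g\in C_0^\infty(\mathbb{R}^2)\}$ under the norm $\big(\int_{\mathbb{R}^2}(|u_x|^2+|D_x^{-1}u_y|^2+u^2)\big)^{1/2}$, and $\|u\|_0^2=\int_{\mathbb{R}^2}(|u_x|^2+|D_x^{-1}u_y|^2)$. Let $S>0$ be a constant with $|u|_6\le S\|u\|_0$ for all $u\in X$; for $r\in[2,6]$ set $\beta_r=\frac32-\frac3r$ and $C_r=S^{r\beta_r}$. Define $h:(0,\infty)\times(0,\infty)\to\mathbb{R}$ by $$h(a,\rho)=\frac12-\frac{\mu}{q}C_q\rho^{q\beta_q-2}a^{(1-\beta_q)q}-\frac1pC_p\rho^{p\beta_p-2}a^{(1-\beta_p)p}.$$ *)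

theory Defs
  imports Complex_Main
begin

definition beta_r :: "real \<Rightarrow> real" where
  "beta_r r = 3/2 - 3/r"

definition C_r :: "real \<Rightarrow> real \<Rightarrow> real" where
  "C_r S r = S powr (r * beta_r r)"

definition hfun :: "real \<Rightarrow> real \<Rightarrow> real \<Rightarrow> real \<Rightarrow> real \<Rightarrow> real \<Rightarrow> real" where
  "hfun q p \<mu> S a \<rho> =
     1/2 - (\<mu> / q) * C_r S q * \<rho> powr (q * beta_r q - 2) * a powr ((1 - beta_r q) * q)
         - (1 / p) * C_r S p * \<rho> powr (p * beta_r p - 2) * a powr ((1 - beta_r p) * p)"

end

theory Submission
  imports Defs
begin

theorem lemma5p2:
  fixes q p \<mu> S a1 \<rho>1 :: real
  assumes "2 < q" and "q < 10/3" and "10/3 < p" and "p < 6"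
    and "\<mu> > 0" and "S > 0"
    and "a1 > 0" and "\<rho>1 > 0"
    and "hfun q p \<mu> S a1 \<rho>1 \<ge> 0"
  shows "\<forall>a2 \<in> {0<..a1}. \<forall>\<rho>2 \<in> {a2 / a1 * \<rho>1 .. \<rho>1}. hfun q p \<mu> S a2 \<rho>2 \<ge> 0"
proof (intro ballI)
  fix a2 \<rho>2 assume a2: "a2 \<in> {0<..a1}" and r2: "\<rho>2 \<in> {a2 / a1 * \<rho>1 .. \<rho>1}"
  define e where "e = q * beta_r q - 2"
  define f where "f = (1 - beta_r q) * q"
  define e' where "e' = p * beta_r p - 2"
  define f' where "f' = (1 - beta_r p) * p"
  have e: "e \<le> 0" using assms(1,2) unfolding e_def beta_r_def by (simp add: field_simps)
  have f: "f \<ge> 0" using assms(1,2) unfolding f_def beta_r_def by (simp add: field_simps)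
  have ef: "e + f \<ge> 0" using assms(1,2) unfolding e_def f_def beta_r_def by (simp add: field_simps)
  have e': "e' \<ge> 0" using assms(3,4) unfolding e'_def beta_r_def by (simp add: field_simps)
  have f': "f' \<ge> 0" using assms(3,4) unfolding f'_def beta_r_def by (simp add: field_simps)
  have a2p: "a2 > 0" "a2 \<le> a1" using a2 by auto
  have lo: "a2 / a1 * \<rho>1 \<le> \<rho>2" "\<rho>2 \<le> \<rho>1" using r2 by auto
  have lop: "a2 / a1 * \<rho>1 > 0" using a2p assms(7,8) by simp
  have r2p: "\<rho>2 > 0" using lo lop by linarith
  have Cq: "C_r S q \<ge> 0" and Cp: "C_r S p \<ge> 0" unfolding C_r_def by auto
  have A1: "\<rho>2 powr e \<le> (a2 / a1 * \<rho>1) powr e" using powr_mono2'[OF e lop lo(1)] .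
  have A2: "(a2 / a1 * \<rho>1) powr e * a2 powr f = \<rho>1 powr e * a1 powr f * (a2/a1) powr (e+f)"
    using a2p assms(7,8) by (simp add: powr_mult powr_divide powr_add field_simps)
  have A3: "(a2/a1) powr (e+f) \<le> 1" using powr_le1[OF ef] a2p assms(7) by simp
  have A: "\<rho>2 powr e * a2 powr f \<le> \<rho>1 powr e * a1 powr f"
  proof -
    have "\<rho>2 powr e * a2 powr f \<le> (a2 / a1 * \<rho>1) powr e * a2 powr f"
      by (rule mult_right_mono[OF A1]) simp
    also have "\<dots> = \<rho>1 powr e * a1 powr f * (a2/a1) powr (e+f)" by (rule A2)
    also have "\<dots> \<le> \<rho>1 powr e * a1 powr f * 1"
      by (rule mult_left_mono[OF A3]) simp
    finally show ?thesis by simp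
  qed
  have B: "\<rho>2 powr e' * a2 powr f' \<le> \<rho>1 powr e' * a1 powr f'"
    by (rule mult_mono) (auto intro: powr_mono2 e' f' lo(2) a2p r2p less_imp_le)
  have "(\<mu> / q) * C_r S q * (\<rho>2 powr e * a2 powr f) \<le> (\<mu> / q) * C_r S q * (\<rho>1 powr e * a1 powr f)"
    by (rule mult_left_mono[OF A]) (use Cq assms(1,5) in simp)
  moreover have "(1 / p) * C_r S p * (\<rho>2 powr e' * a2 powr f') \<le> (1 / p) * C_r S p * (\<rho>1 powr e' * a1 powr f')"
    by (rule mult_left_mono[OF B]) (use Cp assms(3) in simp)
  ultimately show "hfun q p \<mu> S a2 \<rho>2 \<ge> 0" using assms(9)
    unfolding hfun_def e_def[symmetric] f_def[symmetric] e'_def[symmetric] f'_def[symmetric]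
    by (simp add: mult.assoc)
qed

end
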